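(* Let $L_i \ge 1$ be an integer and, for each $\ell \in \{1,\dots,L_i\}$, let $K_\ell \ge 1$ be an integer. For each $\ell$ and each $k \in \{1,\dots,K_\ell\}$ let $\mathbf{c}_{\ell k} \in \mathbb{R}^{d_c}$ (codebook centers) and $\mathbf{o}_{i,\ell k} \in \mathbb{R}^{d_c}$ (capsule outputs) be vectors, and let $c^{(T)}_{i,\ell k} \ge 0$ be routing weights with $\sum_{k=1}^{K_\ell} c^{(T)}_{i,\ell k} = 1$ for each $\ell$. Let $s_{i,\ell} \in \arg\max_k c^{(T)}_{i,\ell k}$. Define $$\hat{\mathbf{x}}^{\mathrm{hard}}_i = \sum_{\ell=1}^{L_i} \mathbf{c}_{\ell s_{i,\ell}}, \qquad \hat{\mathbf{x}}^{\mathrm{soft}}_i = \sum_{\ell=1}^{L_i}\sum_{k=1}^{K_\ell} c^{(T)}_{i,\ell k}\,\mathbf{o}_{i,\ell k}.$$ Assume there are constants $\delta \ge 0$ and $C \ge 0$ with $\|\mathbf{o}_{i,\ell k} - \mathbf{c}_{\ell k}\|_2 \le \delta$ and $\|\mathbf{c}_{\ell k}\|_2 \le C$ for all $\ell, k$. Then $$\big\|\hat{\mathbf{x}}^{\mathrm{soft}}_i - \hat{\mathbf{x}}^{\mathrm{hard}}_i\big\|_2 \le L_i\delta + 2C\sum_{\ell=1}^{L_i}\big(1 - c^{(T)}_{i,\ell s_{i,\ell}}\big),$$ and consequently, for any vector $\mathbf{x}_i \in \mathbb{R}^{d_c}$, $$\big\|\mathbf{x}_i - \hat{\mathbf{x}}^{\mathrm{soft}}_i\big\|_2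 \le \big\|\mathbf{x}_i - \hat{\mathbf{x}}^{\mathrm{hard}}_i\big\|_2 + L_i\delta + 2C\sum_{\ell=1}^{L_i}\big(1 - c^{(T)}_{i,\ell s_{i,\ell}}\big).$$
   Context: In the paper's setting, $c^{(T)}_{i,\ell k}$ are the softmax routing weights of item $i$ over capsules $k$ at SID depth $\ell$ after $T$ routing iterations, $s_{i,\ell}$ is the emitted (argmax) token, $\mathbf{o}_{i,\ell k}$ is the squashed vote of capsule $k$, and $\mathbf{c}_{\ell k}$ is the codebook center of capsule $k$ at depth $\ell$; $\mathbf{x}_i$ is the item embedding, regarded as lying in the same space as the reconstructions. Only the properties listed in the claim are used. *)

theory Defs
  imports "HOL-Analysis.Analysis"
begin

end

theory Submission
  imports Defs
begin

lemma layer_bound: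
  fixes ov cc :: "nat \<Rightarrow> 'a::real_normed_vector" and w :: "nat \<Rightarrow> real"
  assumes fin: "finite A" and sA: "s \<in> A" and wn: "\<And>k. k \<in> A \<Longrightarrow> w k \<ge> 0"
    and ws: "sum w A = 1"
    and oc: "\<And>k. k \<in> A \<Longrightarrow> norm (ov k - cc k) \<le> \<delta>"
    and cb: "\<And>k. k \<in> A \<Longrightarrow> norm (cc k) \<le> C"
  shows "norm ((\<Sum>k\<in>A. w k *\<^sub>R ov k) - cc s) \<le> \<delta> + 2 * C * (1 - w s)"
proof -
  have sw: "sum w A = w s + sum w (A - {s})" using fin sA by (simp add: sum.remove)
  have ws1: "w s \<le> 1" using sw ws sum_nonneg[of "A - {s}" w] wn by force
  have e1: "(\<Sum>k\<in>A. w k *\<^sub>R ov k) = (\<Sum>k\<in>A. w k *\<^sub>R (ov k - cc k)) + (\<Sum>k\<in>A. w k *\<^sub>R cc k)"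
    by (simp add: scaleR_diff_right sum.distrib[symmetric])
  have e2: "(\<Sum>k\<in>A. w k *\<^sub>R cc k) = w s *\<^sub>R cc s + (\<Sum>k\<in>A - {s}. w k *\<^sub>R cc k)"
    using fin sA by (simp add: sum.remove)
  have n1: "norm (\<Sum>k\<in>A. w k *\<^sub>R (ov k - cc k)) \<le> \<delta>"
  proof -
    have "norm (\<Sum>k\<in>A. w k *\<^sub>R (ov k - cc k)) \<le> (\<Sum>k\<in>A. w k * \<delta>)"
      apply (rule order_trans[OF norm_sum])
      apply (rule sum_mono)
      using wn oc by (simp add: mult_left_mono)
    also have "\<dots> = \<delta>" using ws by (simp add: sum_distrib_right[symmetric])
    finally show ?thesis .
  qed
  have n2: "norm (\<Sum>k\<in>A - {s}. w k *\<^sub>R cc k) \<le> (1 - w s) * C"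
  proof -
    have "norm (\<Sum>k\<in>A - {s}. w k *\<^sub>R cc k) \<le> (\<Sum>k\<in>A - {s}. w k * C)"
      apply (rule order_trans[OF norm_sum])
      apply (rule sum_mono)
      using wn cb by (simp add: mult_left_mono)
    also have "\<dots> = (1 - w s) * C" using ws sw by (simp add: sum_distrib_right[symmetric])
    finally show ?thesis .
  qed
  have n3: "norm ((1 - w s) *\<^sub>R cc s) \<le> (1 - w s) * C"
    using ws1 cb[OF sA] by (simp add: mult_left_mono)
  have "(\<Sum>k\<in>A. w k *\<^sub>R ov k) - cc s = (\<Sum>k\<in>A. w k *\<^sub>R (ov k - cc k))
      + ((\<Sum>k\<in>A - {s}. w k *\<^sub>R cc k) - (1 - w s) *\<^sub>R cc s)"
    using e1 e2 by (simp add: algebra_simps)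
  hence "norm ((\<Sum>k\<in>A. w k *\<^sub>R ov k) - cc s) \<le> norm (\<Sum>k\<in>A. w k *\<^sub>R (ov k - cc k))
      + (norm (\<Sum>k\<in>A - {s}. w k *\<^sub>R cc k) + norm ((1 - w s) *\<^sub>R cc s))"
    by (metis (no_types, lifting) add_left_mono norm_triangle_ineq norm_triangle_ineq4 order_trans)
  moreover have "2 * C * (1 - w s) = (1 - w s) * C + (1 - w s) * C" by (simp add: algebra_simps)
  ultimately show ?thesis using n1 n2 n3 by linarith
qed

theorem proposition1:
  fixes L :: nat and K :: "nat \<Rightarrow> nat"
    and cen out :: "nat \<Rightarrow> nat \<Rightarrow> real ^ 'd"
    and w :: "nat \<Rightarrow> nat \<Rightarrow> real"
    and s :: "nat \<Rightarrow> nat"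
    and \<delta> C :: real
  assumes L_pos: "L \<ge> 1"
    and K_pos: "\<And>l. l \<in> {1..L} \<Longrightarrow> K l \<ge> 1"
    and w_nonneg: "\<And>l k. l \<in> {1..L} \<Longrightarrow> k \<in> {1..K l} \<Longrightarrow> w l k \<ge> 0"
    and w_sum: "\<And>l. l \<in> {1..L} \<Longrightarrow> (\<Sum>k=1..K l. w l k) = 1"
    and s_range: "\<And>l. l \<in> {1..L} \<Longrightarrow> s l \<in> {1..K l}"
    and s_argmax: "\<And>l k. l \<in> {1..L} \<Longrightarrow> k \<in> {1..K l} \<Longrightarrow> w l k \<le> w l (s l)"
    and \<delta>_nonneg: "\<delta> \<ge> 0" and C_nonneg: "C \<ge> 0"
    and out_close: "\<And>l k. l \<in> {1..L} \<Longrightarrow> k \<in> {1..K l} \<Longrightarrow> norm (out l k - cen l k) \<le> \<delta>"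
    and cen_bound: "\<And>l k. l \<in> {1..L} \<Longrightarrow> k \<in> {1..K l} \<Longrightarrow> norm (cen l k) \<le> C"
  defines "x_hard \<equiv> (\<Sum>l=1..L. cen l (s l))"
    and "x_soft \<equiv> (\<Sum>l=1..L. \<Sum>k=1..K l. w l k *\<^sub>R out l k)"
  shows "norm (x_soft - x_hard) \<le> real L * \<delta> + 2 * C * (\<Sum>l=1..L. 1 - w l (s l))
       \<and> (\<forall>x :: real ^ 'd. norm (x - x_soft)
            \<le> norm (x - x_hard) + real L * \<delta> + 2 * C * (\<Sum>l=1..L. 1 - w l (s l)))"
proof -
  have lb: "\<And>l. l \<in> {1..L} \<Longrightarrow> norm ((\<Sum>k=1..K l. w l k *\<^sub>R out l k) - cen l (s l)) \<le> \<delta> + 2 * C * (1 - w l (s l))"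
  proof -
    fix l assume l: "l \<in> {1..L}"
    show "norm ((\<Sum>k=1..K l. w l k *\<^sub>R out l k) - cen l (s l)) \<le> \<delta> + 2 * C * (1 - w l (s l))"
      by (rule layer_bound[OF _ s_range[OF l] w_nonneg[OF l] w_sum[OF l] out_close[OF l] cen_bound[OF l]]) simp_all
  qed
  have "x_soft - x_hard = (\<Sum>l=1..L. (\<Sum>k=1..K l. w l k *\<^sub>R out l k) - cen l (s l))"
    unfolding x_soft_def x_hard_def by (simp add: sum_subtractf)
  hence "norm (x_soft - x_hard) \<le> (\<Sum>l=1..L. \<delta> + 2 * C * (1 - w l (s l)))"
  proof -
    have "norm (\<Sum>l=1..L. (\<Sum>k=1..K l. w l k *\<^sub>R out l k) - cen l (s l)) \<le> (\<Sum>l=1..L. \<delta> + 2 * C * (1 - w l (s l)))"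
      by (rule order_trans[OF norm_sum sum_mono[OF lb]])
    thus ?thesis using \<open>x_soft - x_hard = _\<close> by simp
  qed
  also have "\<dots> = real L * \<delta> + 2 * C * (\<Sum>l=1..L. 1 - w l (s l))"
    by (simp add: sum.distrib sum_distrib_left)
  finally have A: "norm (x_soft - x_hard) \<le> real L * \<delta> + 2 * C * (\<Sum>l=1..L. 1 - w l (s l))" .
  show ?thesis
  proof (intro conjI allI)
    fix x :: "real ^ 'd"
    have "norm (x - x_soft) \<le> norm (x - x_hard) + norm (x_soft - x_hard)"
    proof -
      have "x - x_soft = (x - x_hard) - (x_soft - x_hard)" by simp
      thus ?thesis using norm_triangle_ineq4[of "x - x_hard" "x_soft - x_hard"] by simp
    qed
    thus "norm (x - x_soft) \<le> norm (x - x_hard) + real L * \<delta> + 2 * C * (\<Sum>l=1..L. 1 - w l (s l))"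
      using A by linarith
  qed (rule A)
qed

end
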